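(* For $x\in X(l_1,\dots,l_n,l_\infty)$ let $g(x)$ be the greatest common divisor of the numbers $m_{a,b}(x)$ of arcs joining the pairs $\{a,b\}$ of marked points of $x$. Then $g(hx)=g(x)$ for every $h\in J_n$.
   Context: Cactus group: $J_n$ is the group generated by $s_{p,q}$, $1\le p<q\le n$, subject to the relations $s_{p,q}^2=e$; $s_{p,q}s_{p',q'}=s_{p',q'}s_{p,q}$ if $[p,q]$ and $[p',q']$ are disjoint; $s_{p,q}s_{p',q'}s_{p,q}=s_{p+q-q',p+q-p'}$ if $p\le p'<q'\le q$. Arc diagrams: fix nonnegative integers $l_1,\dots,l_n,l_\infty$. On the boundary circle of a closed disc place $n+1$ marked positions: position $0$ (occupied by $z_\infty$) and positions $1,\dots,n$ following it clockwise. An arc diagram is a bijective assignment of labels $z_1,\dots,z_n$ to positions $1,\dots,n$ together with a finite collection of simple arcs in the disc, pairwise disjoint except at endpoints, each joining two distinct marked points, such that $z_j$ is an endpoint of exactly $l_j$ arcs ($j\in\{1,\dots,n,\infty\}$; $l_j$ is the valence). Parallel arcs are allowed; diagrams are up to isotopy, equivalently determined by the labelling and the number of arcs between each pair of marked points. $X(l_1,\dots,l_n,l_\infty)$ is the set of such diagrams. Action: $s_{p,q}$ ($1\le p<q\le n$) acts by cutting off positions $p,\dots,q$ with a chord $\ell$ (arcs isotoped to cross $\ell$ at most once), reflecting that region by the reflection reversing $\ell$ (label at position $p+t$ goes to position $q-t$, crossing points on $\ell$ reversed), leaving the rest unchanged and reconnecting arcs at $\ell$. Words act right to left; this is an action of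 $J_n$. *)

theory Defs
  imports Main
begin

text \<open>Marked positions are 0,1,...,n in clockwise order, position 0 carries
  z_infinity. Labels are encoded as numbers: label 0 stands for z_infinity and label j
  (1 \<le> j \<le> n) for z_j. A diagram is a pair (lab, m): lab a is the label at position a,
  and m a b is the number of arcs joining positions a and b.
  The valences are given by l :: nat \<Rightarrow> nat with l 0 = l_infinity and l j = l_j.\<close>

type_synonym arc_diagram = "(nat \<Rightarrow> nat) \<times> (nat \<Rightarrow> nat \<Rightarrow> nat)"

definition arc_diagrams :: "nat \<Rightarrow> (nat \<Rightarrow> nat) \<Rightarrow> arc_diagram set" where
  "arc_diagrams n l = {(lab, m).
      lab 0 = 0 \<and> bij_betw lab {1..n} {1..n} \<and> (\<forall>a>n. lab a = 0)
    \<and> (\<forall>a b. m a b = m b a)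
    \<and> (\<forall>a. m a a = 0)
    \<and> (\<forall>a b. n < a \<longrightarrow> m a b = 0)
    \<and> (\<forall>a b c d. a < c \<and> c < b \<and> b < d \<and> d \<le> n \<longrightarrow> m a b = 0 \<or> m c d = 0)
    \<and> (\<forall>a\<le>n. (\<Sum>b\<le>n. m a b) = l (lab a))}"

definition arc_gcd :: "nat \<Rightarrow> arc_diagram \<Rightarrow> nat" where
  "arc_gcd n x = Gcd {snd x a b | a b. a < b \<and> b \<le> n}"

definition outside_order :: "nat \<Rightarrow> nat \<Rightarrow> nat \<Rightarrow> nat list" where
  "outside_order n p q = [q+1..<n+1] @ [0..<p]"

text \<open>The arcs crossing the chord, listed in order of their crossing points along the chord,
  starting from the end of the chord lying between positions q and q+1.\<close>
definition crossing_list :: "nat \<Rightarrow> nat \<Rightarrow> nat \<Rightarrow> (nat \<Rightarrow> nat \<Rightarrow> nat) \<Rightarrow> (nat \<times> nat) list" where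
  "crossing_list n p q m =
     concat (map (\<lambda>i. concat (map (\<lambda>j. replicate (m i j) (i, j)) (outside_order n p q)))
                 (rev [p..<q+1]))"

text \<open>After reflecting: the inside piece at crossing point k is moved to crossing point K+1-k
  and its inside endpoint i to p+q-i; the outside pieces stay.\<close>
definition new_crossing :: "nat \<Rightarrow> nat \<Rightarrow> nat \<Rightarrow> (nat \<Rightarrow> nat \<Rightarrow> nat) \<Rightarrow> (nat \<times> nat) list" where
  "new_crossing n p q m =
     (let L = crossing_list n p q m in
      zip (map (\<lambda>i. p + q - i) (rev (map fst L))) (map snd L))"

definition cactus_gen_act :: "nat \<Rightarrow> nat \<Rightarrow> nat \<Rightarrow> arc_diagram \<Rightarrow> arc_diagram" where
  "cactus_gen_act n p q x =
     (let lab = fst x; m = snd x;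
          ins = (\<lambda>a. p \<le> a \<and> a \<le> q);
          cnt = (\<lambda>a b. length (filter (\<lambda>e. e = (a, b)) (new_crossing n p q m)))
      in ((\<lambda>a. if ins a then lab (p + q - a) else lab a),
          (\<lambda>a b. if ins a \<and> ins b then m (p + q - a) (p + q - b)
                 else if ins a then cnt a b
                 else if ins b then cnt b a
                 else m a b)))"

text \<open>Elements of J_n are represented by words in the generators s_{p,q} (pairs (p,q));
  words act right to left.\<close>
definition cactus_word_act :: "nat \<Rightarrow> (nat \<times> nat) list \<Rightarrow> arc_diagram \<Rightarrow> arc_diagram" where
  "cactus_word_act n w x = foldr (\<lambda>(p, q) y. cactus_gen_act n p q y) w x"

end

theory Submission
  imports Defs "HOL-Library.Multiset"
begin


lemma div_sub_mult: assumes "0 < (d::nat)" "d*t \<le> k" shows "(k - d*t) div d = k div d - t"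
proof -
  obtain r where "k = d*t + r" using assms(2) le_Suc_ex by blast
  then show ?thesis using assms(1) by simp
qed

lemma rev_div: assumes "0 < (d::nat)" "k < d*t" shows "(d*t - Suc k) div d = t - Suc (k div d)"
proof -
  define u where "u = k div d"
  define v where "v = k mod d"
  have k: "k = d*u + v" unfolding u_def v_def by simp
  have v: "v < d" unfolding v_def using assms by simp
  have ut: "u < t" unfolding u_def using assms
    by (simp add: div_less_iff_less_mult mult.commute)
  obtain s where t: "t = Suc u + s" using ut less_imp_Suc_add by blast
  define w where "w = d - Suc v"
  have w: "w < d" using v unfolding w_def by simp
  have e: "d*t - Suc k = d*s + w" unfolding w_def using k v t by (simp add: algebra_simps)
  have "(d*s + w) div d = s" using w by simp
  then show ?thesis using e t u_def by simp
qed

lemma lt_mult_div: "0 < (d::nat) \<Longrightarrow> k < d*t \<longleftrightarrow> k div d < t"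
  by (simp add: div_less_iff_less_mult mult.commute)

definition chunked :: "nat \<Rightarrow> 'a list \<Rightarrow> bool" where
  "chunked d xs = (d dvd length xs \<and> (\<forall>k k'. k < length xs \<longrightarrow> k' < length xs \<longrightarrow> k div d = k' div d \<longrightarrow> xs ! k = xs ! k'))"

lemma chunkedD: "chunked d xs \<Longrightarrow> k < length xs \<Longrightarrow> k' < length xs \<Longrightarrow> k div d = k' div d \<Longrightarrow> xs ! k = xs ! k'"
  unfolding chunked_def by blast

lemma chunked_replicate: "d dvd c \<Longrightarrow> chunked d (replicate c x)"
  by (simp add: chunked_def)

lemma chunked_Nil: "chunked d []" by (simp add: chunked_def)

lemma chunked_append:
  assumes "chunked d xs" "chunked d ys" shows "chunked d (xs @ ys)"
proof -
  obtain t where t: "length xs = d * t" using assms(1) unfolding chunked_def dvd_def by blast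
  have "d dvd length xs" "d dvd length ys" using assms unfolding chunked_def by blast+
  then have "d dvd length (xs @ ys)" by simp
  moreover have "(xs @ ys) ! k = (xs @ ys) ! k'"
    if "k < length (xs@ys)" "k' < length (xs@ys)" "k div d = k' div d" for k k'
  proof (cases "d = 0")
    case True
    then have "length ys = 0" using \<open>d dvd length ys\<close> by simp
    then show ?thesis using t that True by simp
  next
    case False
    have A: "k < length xs \<longleftrightarrow> k' < length xs"
    proof -
      have "k < d*t \<longleftrightarrow> k div d < t" using False
        using lt_mult_div by blast
      moreover have "k' < d*t \<longleftrightarrow> k' div d < t" using False
        using lt_mult_div by blast
      ultimately show ?thesis using t that(3) by simp
    qed
    show ?thesis
    proof (cases "k < length xs")
      case True
      then have "k' < length xs" using A by simp
      then have "xs ! k = xs ! k'" using True that(3) chunkedD[OF assms(1), of k k'] by blast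
      then show ?thesis using True \<open>k' < length xs\<close> by (simp add: nth_append)
    next
      case F: False
      have "(k - d*t) div d = k div d - t" using F t False div_sub_mult by simp
      moreover have "(k' - d*t) div d = k' div d - t" using F A t False div_sub_mult by simp
      moreover have "k - length xs < length ys" "k' - length xs < length ys" using that F A by auto
      moreover have "(k - length xs) div d = (k' - length xs) div d" using calculation(1,2) t that(3) by simp
      ultimately have "ys ! (k - length xs) = ys ! (k' - length xs)"
        using chunkedD[OF assms(2)] by blast
      then show ?thesis using F A by (simp add: nth_append)
    qed
  qed
  ultimately show ?thesis unfolding chunked_def by blast
qed

lemma chunked_concat: "(\<forall>x\<in>set xss. chunked d x) \<Longrightarrow> chunked d (concat xss)"
  by (induction xss) (auto simp: chunked_Nil chunked_append)

lemma chunked_map: assumes "chunked d xs" shows "chunked d (map f xs)"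
  unfolding chunked_def
proof (intro conjI allI impI)
  show "d dvd length (map f xs)" using assms unfolding chunked_def by simp
  fix k k' assume h: "k < length (map f xs)" "k' < length (map f xs)" "k div d = k' div d"
  then have "xs ! k = xs ! k'" by (intro chunkedD[OF assms]) auto
  then show "map f xs ! k = map f xs ! k'" using h by simp
qed

lemma chunked_zip: assumes "chunked d xs" "chunked d ys" "length xs = length ys" shows "chunked d (zip xs ys)"
  unfolding chunked_def
proof (intro conjI allI impI)
  show "d dvd length (zip xs ys)" using assms unfolding chunked_def by simp
  fix k k' assume h: "k < length (zip xs ys)" "k' < length (zip xs ys)" "k div d = k' div d"
  then have "xs ! k = xs ! k'" by (intro chunkedD[OF assms(1)]) auto
  moreover have "ys ! k = ys ! k'" using h by (intro chunkedD[OF assms(2)]) auto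
  ultimately show "zip xs ys ! k = zip xs ys ! k'" using h by simp
qed

lemma chunked_rev: assumes "chunked d xs" shows "chunked d (rev xs)"
proof -
  obtain t where t: "length xs = d * t" using assms(1) unfolding chunked_def dvd_def by blast
  have "rev xs ! k = rev xs ! k'" if "k < length xs" "k' < length xs" "k div d = k' div d" for k k'
  proof (cases "d = 0")
    case True then show ?thesis using t that by auto
  next
    case False
    have "(length xs - Suc k) div d = (length xs - Suc k') div d"
      using rev_div[of d k t] rev_div[of d k' t] False that t by simp
    moreover have "length xs - Suc k < length xs" "length xs - Suc k' < length xs" using that by auto
    ultimately have "xs ! (length xs - Suc k) = xs ! (length xs - Suc k')" using chunkedD[OF assms] by blast
    then show ?thesis using that by (simp add: rev_nth)
  qed
  moreover have "d dvd length (rev xs)" using assms unfolding chunked_def by simp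
  ultimately show ?thesis unfolding chunked_def by (metis length_rev)
qed

lemma chunked_filter: "chunked d xs \<Longrightarrow> d dvd length (filter P xs)"
proof (induction "length xs" arbitrary: xs rule: less_induct)
  case less
  show ?case
  proof (cases "xs = []")
    case True then show ?thesis by simp
  next
    case ne: False
    then have dpos: "d > 0" using less.prems unfolding chunked_def by (auto intro: Nat.gr0I)
    have len: "d \<le> length xs" using less.prems ne unfolding chunked_def
      by (simp add: dvd_imp_le)
    have eq: "take d xs = replicate d (xs ! 0)"
    proof (rule nth_equalityI)
      show "length (take d xs) = length (replicate d (xs ! 0))" using len by simp
      fix i assume "i < length (take d xs)"
      then have "i < d" "i < length xs" by auto
      then show "take d xs ! i = replicate d (xs ! 0) ! i"
        using chunkedD[OF less.prems, of i 0] ne by simp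
    qed
    have ch: "chunked d (drop d xs)"
      unfolding chunked_def
    proof (intro conjI allI impI)
      show "d dvd length (drop d xs)" using less.prems unfolding chunked_def by simp
      fix k k' assume "k < length (drop d xs)" "k' < length (drop d xs)" "k div d = k' div d"
      then have "d + k < length xs" "d + k' < length xs" "(d + k) div d = (d + k') div d" using len dpos div_add_self1[of d k] div_add_self1[of d k'] by auto
      then have "xs ! (d + k) = xs ! (d + k')" using chunkedD[OF less.prems] by blast
      then show "drop d xs ! k = drop d xs ! k'" using len by simp
    qed
    have "length (drop d xs) < length xs" using dpos ne by simp
    then have "d dvd length (filter P (drop d xs))"
      using less.hyps ch by blast
    moreover have "filter P (replicate c y) = (if P y then replicate c y else [])" for c y
      by (induction c) auto
    then have "d dvd length (filter P (take d xs))" unfolding eq by simp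
    moreover have "filter P xs = filter P (take d xs) @ filter P (drop d xs)"
      by (simp flip: filter_append)
    ultimately show ?thesis by simp
  qed
qed



lemma sorted_wrt_replicate_gen: "n = 0 \<or> R x x \<Longrightarrow> sorted_wrt R (replicate n x)"
  by (induction n) auto

lemma sorted_wrt_concat_rep:
  assumes "sorted_wrt T E"
    and "\<And>e. e \<in> set E \<Longrightarrow> 0 < c e \<Longrightarrow> R e e"
    and "\<And>e e'. e \<in> set E \<Longrightarrow> e' \<in> set E \<Longrightarrow> T e e' \<Longrightarrow> 0 < c e \<Longrightarrow> 0 < c e' \<Longrightarrow> R e e'"
  shows "sorted_wrt R (concat (map (\<lambda>e. replicate (c e) e) E))"
  using assms
proof (induction E)
  case Nil then show ?case by simp
next
  case (Cons x xs)
  have IH: "sorted_wrt R (concat (map (\<lambda>e. replicate (c e) e) xs))"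
    using Cons.prems by (intro Cons.IH) auto
  have rep: "sorted_wrt R (replicate (c x) x)"
    using Cons.prems(2)[of x] by (intro sorted_wrt_replicate_gen) auto
  have cross: "\<forall>u\<in>set (replicate (c x) x). \<forall>v\<in>set (concat (map (\<lambda>e. replicate (c e) e) xs)). R u v"
  proof (intro ballI)
    fix u v assume u: "u \<in> set (replicate (c x) x)" and v: "v \<in> set (concat (map (\<lambda>e. replicate (c e) e) xs))"
    from u have ux: "u = x" "0 < c x" by auto
    from v obtain y where y: "y \<in> set xs" "v = y" "0 < c y" by auto
    have "T x y" using Cons.prems(1) y by simp
    then show "R u v" using Cons.prems(3)[of x y] ux y by simp
  qed
  show ?case using IH rep cross by (simp add: sorted_wrt_append)
qed

lemma count_rep:
  assumes "distinct E"
  shows "length (filter (\<lambda>x. x = e) (concat (map (\<lambda>e. replicate (c e) e) E))) = (if e \<in> set E then c e else 0)"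
  using assms
proof (induction E)
  case Nil then show ?case by simp
next
  case (Cons x xs)
  have h: "length (filter (\<lambda>y. y = e) (replicate k x)) = (if x = e then k else 0)" for k
    by (induction k) auto
  have IH: "length (filter (\<lambda>x. x = e) (concat (map (\<lambda>e. replicate (c e) e) xs))) = (if e \<in> set xs then c e else 0)"
    using Cons.IH Cons.prems by simp
  have "length (filter (\<lambda>x. x = e) (concat (map (\<lambda>e. replicate (c e) e) (x#xs))))
     = length (filter (\<lambda>y. y = e) (replicate (c x) x)) + length (filter (\<lambda>x. x = e) (concat (map (\<lambda>e. replicate (c e) e) xs)))"
    by simp
  also have "\<dots> = (if e \<in> set (x#xs) then c e else 0)"
    unfolding h IH using Cons.prems by auto
  finally show ?case .
qed

lemma set_concat_rep: "set (concat (map (\<lambda>e. replicate (c e) e) E)) = {e \<in> set E. 0 < c e}"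
  by auto

lemma count_list_filter: "count_list xs x = length (filter (\<lambda>e. e = x) xs)"
  unfolding count_list_eq_length_filter by (metis (full_types) eq_commute)

definition sig :: "nat \<Rightarrow> nat \<Rightarrow> nat \<Rightarrow> nat" where
  "sig n q j = (if q < j then j else j + n + 1)"

definition ncr :: "nat \<Rightarrow> (nat \<Rightarrow> nat \<Rightarrow> nat) \<Rightarrow> bool" where
  "ncr n m = (\<forall>a b c d. a < c \<and> c < b \<and> b < d \<and> d \<le> n \<longrightarrow> m a b = 0 \<or> m c d = 0)"

definition symm :: "(nat \<Rightarrow> nat \<Rightarrow> nat) \<Rightarrow> bool" where
  "symm m = (\<forall>a b. m a b = m b a)"

lemma ncrD: assumes "ncr n m" "a < c" "c < b" "b < d" "d \<le> n" shows "m a b = 0 \<or> m c d = 0"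
proof -
  note H = assms(1)[unfolded ncr_def, rule_format]
  show ?thesis by (rule H) (use assms(2-5) in simp)
qed

lemma symmD: assumes "symm m" shows "m a b = m b a"
  using assms[unfolded symm_def, rule_format, of a b] .

definition cnt :: "nat \<Rightarrow> nat \<Rightarrow> nat \<Rightarrow> (nat \<Rightarrow> nat \<Rightarrow> nat) \<Rightarrow> nat \<Rightarrow> nat \<Rightarrow> nat" where
  "cnt n p q m a b = length (filter (\<lambda>e. e = (a, b)) (new_crossing n p q m))"

lemma gen_snd: "snd (cactus_gen_act n p q x) a b =
   (if p \<le> a \<and> a \<le> q \<and> p \<le> b \<and> b \<le> q then snd x (p+q-a) (p+q-b)
    else if p \<le> a \<and> a \<le> q then cnt n p q (snd x) a b
    else if p \<le> b \<and> b \<le> q then cnt n p q (snd x) b a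
    else snd x a b)"
  unfolding cactus_gen_act_def Let_def cnt_def
  by (cases "p \<le> a \<and> a \<le> q"; cases "p \<le> b \<and> b \<le> q") (simp_all only: fst_conv snd_conv if_True if_False simp_thms)

locale pq =
  fixes n p q :: nat
  assumes pq: "1 \<le> p" "p < q" "q \<le> n"
begin

abbreviation "I a \<equiv> p \<le> a \<and> a \<le> q"
abbreviation "r a \<equiv> p + q - a"
abbreviation "Ot \<equiv> outside_order n p q"
abbreviation "E \<equiv> List.product (rev [p..<q+1]) Ot"
abbreviation "W \<equiv> 2*n + 2"

lemma setO: "set Ot = {j. j \<le> n \<and> (q < j \<or> j < p)}"
  using pq by (auto simp: outside_order_def)

lemma distO: "distinct Ot"
  using pq by (auto simp: outside_order_def)

lemma setE: "e \<in> set E \<longleftrightarrow> I (fst e) \<and> snd e \<in> set Ot"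
  by (cases e) auto

lemma distE: "distinct E"
  using distO by (simp add: distinct_product)

lemma CL_eq: "crossing_list n p q m = concat (map (\<lambda>e. replicate (m (fst e) (snd e)) e) E)"
proof -
  have "concat (map (\<lambda>i. concat (map (\<lambda>j. replicate (m i j) (i, j)) Ot)) L)
        = concat (map (\<lambda>e. replicate (m (fst e) (snd e)) e) (List.product L Ot))" for L
    by (induction L) (simp_all add: comp_def)
  then show ?thesis unfolding crossing_list_def by simp
qed

lemma set_CL: "e \<in> set (crossing_list n p q m) \<longleftrightarrow> I (fst e) \<and> snd e \<in> set Ot \<and> 0 < m (fst e) (snd e)"
  unfolding CL_eq set_concat_rep using setE by auto

lemma count_CL: "e \<in> set E \<Longrightarrow> length (filter (\<lambda>x. x = e) (crossing_list n p q m)) = m (fst e) (snd e)"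
  unfolding CL_eq using count_rep[OF distE, of e "\<lambda>e. m (fst e) (snd e)"] by simp

lemma sig_lt: "j \<le> n \<Longrightarrow> sig n q j < W"
  unfolding sig_def by auto

lemma sorted_E: "sorted_wrt (\<lambda>e e'. fst e' \<le> fst e \<and> (fst e = fst e' \<longrightarrow> sig n q (snd e) \<le> sig n q (snd e'))) E"
proof -
  have sO: "sorted_wrt (\<lambda>j j'. sig n q j \<le> sig n q j') Ot"
  proof -
    have 1: "sorted_wrt (\<lambda>j j'. sig n q j \<le> sig n q j') [q+1..<n+1]"
      by (rule sorted_wrt_mono_rel[OF _ sorted_wrt_upt]) (auto simp: sig_def)
    have 2: "sorted_wrt (\<lambda>j j'. sig n q j \<le> sig n q j') [0..<p]"
      using pq by (intro sorted_wrt_mono_rel[OF _ sorted_wrt_upt]) (auto simp: sig_def)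
    show ?thesis unfolding outside_order_def using 1 2 pq
      by (auto simp: sorted_wrt_append sig_def)
  qed
  have sI: "sorted_wrt (\<lambda>i i'. i' < i) (rev [p..<q+1])"
    using sorted_wrt_upt[of p "q+1"] by (simp only: sorted_wrt_rev)
  have gen: "sorted_wrt (\<lambda>i i'. i' < i) L \<Longrightarrow>
     sorted_wrt (\<lambda>e e'. fst e' \<le> fst e \<and> (fst e = fst e' \<longrightarrow> sig n q (snd e) \<le> sig n q (snd e'))) (List.product L Ot)" for L :: "nat list"
  proof (induction L)
    case Nil then show ?case by simp
  next
    case (Cons i L)
    have "sorted_wrt (\<lambda>e e'. fst e' \<le> fst e \<and> (fst e = fst e' \<longrightarrow> sig n q (snd e) \<le> sig n q (snd e'))) (map (Pair i) Ot)"
      unfolding sorted_wrt_map by (rule sorted_wrt_mono_rel[OF _ sO]) simp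
    moreover have "sorted_wrt (\<lambda>e e'. fst e' \<le> fst e \<and> (fst e = fst e' \<longrightarrow> sig n q (snd e) \<le> sig n q (snd e'))) (List.product L Ot)"
      using Cons.IH Cons.prems by simp
    moreover have "\<forall>x\<in>set (map (Pair i) Ot). \<forall>y\<in>set (List.product L Ot). fst y \<le> fst x \<and> (fst x = fst y \<longrightarrow> sig n q (snd x) \<le> sig n q (snd y))"
    proof (intro ballI)
      fix x y assume "x \<in> set (map (Pair i) Ot)" "y \<in> set (List.product L Ot)"
      then have "fst x = i" "fst y \<in> set L" by auto
      then have "fst y < fst x" using Cons.prems by simp
      then show "fst y \<le> fst x \<and> (fst x = fst y \<longrightarrow> sig n q (snd x) \<le> sig n q (snd y))" by simp
    qed
    moreover have "List.product (i#L) Ot = map (Pair i) Ot @ List.product L Ot" by simp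
    ultimately show ?case by (simp only: sorted_wrt_append)
  qed
  show ?thesis by (rule gen[OF sI])
qed


abbreviation "CL m \<equiv> crossing_list n p q m"
abbreviation "NC m \<equiv> new_crossing n p q m"

lemma NC_eq: "NC m = zip (map r (rev (map fst (CL m)))) (map snd (CL m))"
  unfolding new_crossing_def Let_def rev_map ..

lemma NC_len: "length (NC m) = length (CL m)"
  unfolding NC_eq by simp

lemma NC_nth: "k < length (CL m) \<Longrightarrow> NC m ! k = (r (fst (CL m ! (length (CL m) - Suc k))), snd (CL m ! k))"
  unfolding NC_eq by (simp add: rev_nth)

lemma CL_nth_mem: "k < length (CL m) \<Longrightarrow> I (fst (CL m ! k)) \<and> snd (CL m ! k) \<in> set Ot \<and> 0 < m (fst (CL m ! k)) (snd (CL m ! k))"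
  using nth_mem[of k "CL m"] set_CL by blast

lemma NC_set: "e \<in> set (NC m) \<Longrightarrow> \<exists>k < length (CL m). e = (r (fst (CL m ! (length (CL m) - Suc k))), snd (CL m ! k))"
  by (metis NC_len NC_nth in_set_conv_nth)

lemma rr: "I u \<Longrightarrow> r (r u) = u" by simp

lemma N2: assumes "(a, b) \<in> set (NC m)"
  shows "I a \<and> b \<in> set Ot \<and> (\<exists>e. I e \<and> 0 < m e b) \<and> (\<exists>j\<in>set Ot. 0 < m (r a) j)"
proof -
  obtain k where k: "k < length (CL m)" "a = r (fst (CL m ! (length (CL m) - Suc k)))" "b = snd (CL m ! k)"
    using NC_set[OF assms] by auto
  define k' where "k' = length (CL m) - Suc k"
  have k': "k' < length (CL m)" unfolding k'_def using k by simp
  have m1: "I (fst (CL m ! k)) \<and> snd (CL m ! k) \<in> set Ot \<and> 0 < m (fst (CL m ! k)) (snd (CL m ! k))"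
    by (rule CL_nth_mem[OF k(1)])
  have m2: "I (fst (CL m ! k')) \<and> snd (CL m ! k') \<in> set Ot \<and> 0 < m (fst (CL m ! k')) (snd (CL m ! k'))"
    by (rule CL_nth_mem[OF k'])
  have a: "a = r (fst (CL m ! k'))" using k unfolding k'_def by simp
  have Ia: "I a" using a m2 by auto
  have ra: "r a = fst (CL m ! k')" using a m2 by auto
  have 1: "b \<in> set Ot" using m1 k(3) by simp
  have 2: "\<exists>e. I e \<and> 0 < m e b" using m1 k(3) by blast
  have 3: "\<exists>j\<in>set Ot. 0 < m (r a) j" unfolding ra using m2 by blast
  show ?thesis using Ia 1 2 3 by blast
qed

lemma S1: "sorted_wrt (\<lambda>x y. fst y \<le> fst x) (CL m)"
  unfolding CL_eq
  by (rule sorted_wrt_concat_rep[OF sorted_E]) auto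

lemma key_nc:
  assumes "ncr n m" "symm m" "p \<le> i'" "i' < i" "i \<le> q" "j \<in> set Ot" "j' \<in> set Ot"
    "0 < m i j" "0 < m i' j'"
  shows "sig n q j \<le> sig n q j'"
proof -
  have j: "j \<le> n" "q < j \<or> j < p" and j': "j' \<le> n" "q < j' \<or> j' < p" using assms(6,7) setO by auto
  show ?thesis
  proof (cases "q < j")
    case True
    show ?thesis
    proof (cases "q < j'")
      case True2: True
      show ?thesis
      proof (rule ccontr)
        assume "\<not> ?thesis"
        then have "j' < j" using True True2 unfolding sig_def by simp
        then have "m i' j' = 0 \<or> m i j = 0" using ncrD[OF assms(1), of i' i j' j] assms True2 j by simp
        then show False using assms by simp
      qed
    next
      case False
      then show ?thesis using True j j' unfolding sig_def by simp
    qed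
  next
    case False
    then have jp: "j < p" using j by simp
    show ?thesis
    proof (cases "q < j'")
      case True2: True
      have "m j i = 0 \<or> m i' j' = 0" using ncrD[OF assms(1), of j i' i j'] assms True2 jp j' by simp
      then show ?thesis using assms symmD[OF assms(2), of j i] by simp
    next
      case False2: False
      then have jp': "j' < p" using j' by simp
      show ?thesis
      proof (rule ccontr)
        assume "\<not> ?thesis"
        then have "j' < j" using False False2 unfolding sig_def by simp
        then have "m j' i' = 0 \<or> m j i = 0" using ncrD[OF assms(1), of j' j i' i] assms jp jp' pq by simp
        then show False using assms symmD[OF assms(2), of j' i'] symmD[OF assms(2), of j i] by simp
      qed
    qed
  qed
qed

lemma S2: assumes "ncr n m" "symm m"
  shows "sorted_wrt (\<lambda>x y. sig n q (snd x) \<le> sig n q (snd y)) (CL m)"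
  unfolding CL_eq
proof (rule sorted_wrt_concat_rep[OF sorted_E])
  fix e :: "nat \<times> nat" show "sig n q (snd e) \<le> sig n q (snd e)" by simp
next
  fix e e' :: "nat \<times> nat"
  assume h: "e \<in> set E" "e' \<in> set E" "fst e' \<le> fst e \<and> (fst e = fst e' \<longrightarrow> sig n q (snd e) \<le> sig n q (snd e'))"
    "0 < m (fst e) (snd e)" "0 < m (fst e') (snd e')"
  show "sig n q (snd e) \<le> sig n q (snd e')"
  proof (cases "fst e = fst e'")
    case True then show ?thesis using h by simp
  next
    case False
    then have "fst e' < fst e" using h by simp
    then show ?thesis using key_nc[OF assms, of "fst e'" "fst e" "snd e" "snd e'"] h setE by simp
  qed
qed

lemma N4: assumes "ncr n m" "symm m" "(a, b) \<in> set (NC m)" "(c, d) \<in> set (NC m)" "c < a"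
  shows "sig n q b \<le> sig n q d"
proof -
  define L where "L = CL m"
  obtain k1 where k1: "k1 < length L" "a = r (fst (L ! (length L - Suc k1)))" "b = snd (L ! k1)"
    using NC_set[OF assms(3)] unfolding L_def by auto
  obtain k2 where k2: "k2 < length L" "c = r (fst (L ! (length L - Suc k2)))" "d = snd (L ! k2)"
    using NC_set[OF assms(4)] unfolding L_def by auto
  have I1: "I (fst (L ! (length L - Suc k1)))" using CL_nth_mem[of "length L - Suc k1" m] k1 unfolding L_def by simp
  have I2: "I (fst (L ! (length L - Suc k2)))" using CL_nth_mem[of "length L - Suc k2" m] k2 unfolding L_def by simp
  have "k1 < k2"
  proof (rule ccontr)
    assume "\<not> k1 < k2"
    then have le: "length L - Suc k1 \<le> length L - Suc k2" by simp
    have "fst (L ! (length L - Suc k2)) \<le> fst (L ! (length L - Suc k1))"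
    proof (cases "length L - Suc k1 = length L - Suc k2")
      case True then show ?thesis by simp
    next
      case False
      then have "length L - Suc k1 < length L - Suc k2" using le by simp
      then show ?thesis using sorted_wrt_nth_less[OF S1[of m]] k2 unfolding L_def by simp
    qed
    then have "a \<le> c" unfolding k1(2) k2(2) by (rule diff_le_mono2)
    then show False using assms(5) by simp
  qed
  then show ?thesis using sorted_wrt_nth_less[OF S2[OF assms(1,2)]] k1 k2 unfolding L_def by simp
qed


lemma pos_filter: "0 < length (filter P xs) \<Longrightarrow> \<exists>x\<in>set xs. P x"
  by (metis filter_False length_0_conv less_irrefl)

lemma gen_P1: "I u \<Longrightarrow> I v \<Longrightarrow> snd (cactus_gen_act n p q x) u v = snd x (r u) (r v)"
  by (simp add: gen_snd)

lemma gen_P2: "I u \<Longrightarrow> \<not> I v \<Longrightarrow> 0 < snd (cactus_gen_act n p q x) u v \<Longrightarrow> (u, v) \<in> set (NC (snd x))"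
  using pos_filter[of "\<lambda>e. e = (u, v)" "NC (snd x)"] by (auto simp: gen_snd cnt_def)

lemma gen_P3: "\<not> I u \<Longrightarrow> I v \<Longrightarrow> 0 < snd (cactus_gen_act n p q x) u v \<Longrightarrow> (v, u) \<in> set (NC (snd x))"
  using pos_filter[of "\<lambda>e. e = (v, u)" "NC (snd x)"] by (auto simp: gen_snd cnt_def)

lemma gen_P4: "\<not> I u \<Longrightarrow> \<not> I v \<Longrightarrow> snd (cactus_gen_act n p q x) u v = snd x u v"
  by (subst gen_snd) (simp only: de_Morgan_conj if_False simp_thms, auto)

lemma gen_symm: assumes "symm (snd x)" shows "symm (snd (cactus_gen_act n p q x))"
  unfolding symm_def
proof (intro allI)
  fix a b show "snd (cactus_gen_act n p q x) a b = snd (cactus_gen_act n p q x) b a"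
    using symmD[OF assms, of "r a" "r b"] symmD[OF assms, of a b] by (subst (1 2) gen_snd) auto
qed

lemma gen_ncr: assumes nc: "ncr n (snd x)" and sy: "symm (snd x)"
  shows "ncr n (snd (cactus_gen_act n p q x))"
  unfolding ncr_def
proof (intro allI impI)
  fix a b c d assume ord: "a < c \<and> c < b \<and> b < d \<and> d \<le> n"
  define m where "m = snd x"
  define m1 where "m1 = snd (cactus_gen_act n p q x)"
  have nc': "ncr n m" "symm m" using nc sy unfolding m_def by auto
  show "m1 a b = 0 \<or> m1 c d = 0"
  proof (rule ccontr)
    assume "\<not> (m1 a b = 0 \<or> m1 c d = 0)"
    then have pos1: "0 < m1 a b" and pos2: "0 < m1 c d" by auto
    have ncD: "\<And>a b c d. a < c \<Longrightarrow> c < b \<Longrightarrow> b < d \<Longrightarrow> d \<le> n \<Longrightarrow> m a b = 0 \<or> m c d = 0"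
      by (rule ncrD[OF nc'(1)])
    have syD: "\<And>a b. m a b = m b a" by (rule symmD[OF nc'(2)])
    have P1: "\<And>u v. I u \<Longrightarrow> I v \<Longrightarrow> m1 u v = m (r u) (r v)" unfolding m_def m1_def by (rule gen_P1)
    have P2: "\<And>u v. I u \<Longrightarrow> \<not> I v \<Longrightarrow> 0 < m1 u v \<Longrightarrow> (u, v) \<in> set (NC m)" unfolding m_def m1_def by (rule gen_P2)
    have P3: "\<And>u v. \<not> I u \<Longrightarrow> I v \<Longrightarrow> 0 < m1 u v \<Longrightarrow> (v, u) \<in> set (NC m)" unfolding m_def m1_def by (rule gen_P3)
    have P4: "\<And>u v. \<not> I u \<Longrightarrow> \<not> I v \<Longrightarrow> m1 u v = m u v" unfolding m_def m1_def by (rule gen_P4)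
    have N2': "\<And>u v. (u, v) \<in> set (NC m) \<Longrightarrow> I u \<and> v \<in> set Ot \<and> (\<exists>e. I e \<and> 0 < m e v) \<and> (\<exists>j\<in>set Ot. 0 < m (r u) j)"
      by (rule N2)
    have N4': "\<And>u v u' v'. (u, v) \<in> set (NC m) \<Longrightarrow> (u', v') \<in> set (NC m) \<Longrightarrow> u' < u \<Longrightarrow> sig n q v \<le> sig n q v'"
      by (rule N4[OF nc'])
    have sO: "\<And>j. j \<in> set Ot \<longleftrightarrow> j \<le> n \<and> (q < j \<or> j < p)" using setO by simp
    have c0: "\<not> (\<not> I a \<and> \<not> I c \<and> \<not> I b \<and> \<not> I d)"
    proof
      assume h: "\<not> I a \<and> \<not> I c \<and> \<not> I b \<and> \<not> I d"
      then have "0 < m a b" "0 < m c d" using pos1 pos2 P4 by auto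
      then show False using ncD[of a c b d] ord by auto
    qed
    have c1: "\<not> (I a \<and> I c \<and> I b \<and> I d)"
    proof
      assume h: "I a \<and> I c \<and> I b \<and> I d"
      then have "0 < m (r a) (r b)" "0 < m (r c) (r d)" using pos1 pos2 P1 by auto
      moreover have "m (r d) (r c) = 0 \<or> m (r b) (r a) = 0" using ord h pq by (intro ncD) auto
      ultimately show False using syD[of "r d" "r c"] syD[of "r b" "r a"] by auto
    qed
    have c2: "\<not> (I a \<and> I c \<and> I b \<and> \<not> I d)"
    proof
      assume h: "I a \<and> I c \<and> I b \<and> \<not> I d"
      then have A: "0 < m (r a) (r b)" using pos1 P1 by auto
      have "(c, d) \<in> set (NC m)" using P2 h pos2 by auto
      then obtain j where j: "j \<in> set Ot" "0 < m (r c) j" using N2' by blast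
      show False
      proof (cases "q < j")
        case True
        then have "m (r b) (r a) = 0 \<or> m (r c) j = 0" using ncD[of "r b" "r c" "r a" j] ord h j sO by auto
        then show ?thesis using A j syD[of "r b" "r a"] by auto
      next
        case False
        then have "j < p" using j sO by auto
        then have "m j (r c) = 0 \<or> m (r b) (r a) = 0" using ncD[of j "r b" "r c" "r a"] ord h pq by auto
        then show ?thesis using A j syD[of "r b" "r a"] syD[of j "r c"] by auto
      qed
    qed
    have c3: "\<not> (\<not> I a \<and> I c \<and> I b \<and> I d)"
    proof
      assume h: "\<not> I a \<and> I c \<and> I b \<and> I d"
      then have A: "0 < m (r c) (r d)" using pos2 P1 by auto
      have "(b, a) \<in> set (NC m)" using P3 h pos1 by auto
      then obtain j where j: "j \<in> set Ot" "0 < m (r b) j" using N2' by blast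
      show False
      proof (cases "q < j")
        case True
        then have "m (r d) (r c) = 0 \<or> m (r b) j = 0" using ncD[of "r d" "r b" "r c" j] ord h j sO by auto
        then show ?thesis using A j syD[of "r d" "r c"] by auto
      next
        case False
        then have "j < p" using j sO by auto
        then have "m j (r b) = 0 \<or> m (r d) (r c) = 0" using ncD[of j "r d" "r b" "r c"] ord h pq by auto
        then show ?thesis using A j syD[of "r d" "r c"] syD[of j "r b"] by auto
      qed
    qed
    have c4: "\<not> (I a \<and> I c \<and> \<not> I b \<and> \<not> I d)"
    proof
      assume h: "I a \<and> I c \<and> \<not> I b \<and> \<not> I d"
      have "(a, b) \<in> set (NC m)" "(c, d) \<in> set (NC m)" using P2 h pos1 pos2 by auto
      then have "sig n q d \<le> sig n q b" using N4'[of c d a b] ord by auto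
      then show False using h ord unfolding sig_def by auto
    qed
    have c5: "\<not> (\<not> I a \<and> \<not> I c \<and> I b \<and> I d)"
    proof
      assume h: "\<not> I a \<and> \<not> I c \<and> I b \<and> I d"
      have "(b, a) \<in> set (NC m)" "(d, c) \<in> set (NC m)" using P3 h pos1 pos2 by auto
      then have "sig n q c \<le> sig n q a" using N4'[of d c b a] ord by auto
      then show False using h ord unfolding sig_def by auto
    qed
    have c6: "\<not> (\<not> I a \<and> I c \<and> I b \<and> \<not> I d)"
    proof
      assume h: "\<not> I a \<and> I c \<and> I b \<and> \<not> I d"
      have "(b, a) \<in> set (NC m)" "(c, d) \<in> set (NC m)" using P3 P2 h pos1 pos2 by auto
      then have "sig n q a \<le> sig n q d" using N4'[of b a c d] ord by auto
      then show False using h ord unfolding sig_def by auto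
    qed
    have c7: "\<not> (I a \<and> \<not> I c \<and> \<not> I b \<and> \<not> I d)"
    proof
      assume h: "I a \<and> \<not> I c \<and> \<not> I b \<and> \<not> I d"
      have "(a, b) \<in> set (NC m)" using P2 h pos1 by auto
      then obtain e where e: "I e" "0 < m e b" using N2' by blast
      have "0 < m c d" using P4 h pos2 by auto
      then show False using ncD[of e c b d] e ord h by auto
    qed
    have c8: "\<not> (\<not> I a \<and> I c \<and> \<not> I b \<and> \<not> I d)"
    proof
      assume h: "\<not> I a \<and> I c \<and> \<not> I b \<and> \<not> I d"
      have "(c, d) \<in> set (NC m)" using P2 h pos2 by auto
      then obtain e where e: "I e" "0 < m e d" using N2' by blast
      have "0 < m a b" using P4 h pos1 by auto
      then show False using ncD[of a e b d] e ord h by auto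
    qed
    have c9: "\<not> (\<not> I a \<and> \<not> I c \<and> I b \<and> \<not> I d)"
    proof
      assume h: "\<not> I a \<and> \<not> I c \<and> I b \<and> \<not> I d"
      have "(b, a) \<in> set (NC m)" using P3 h pos1 by auto
      then obtain e where e: "I e" "0 < m e a" using N2' by blast
      have "0 < m c d" using P4 h pos2 by auto
      then show False using ncD[of a c e d] e ord h syD[of a e] by auto
    qed
    have c10: "\<not> (\<not> I a \<and> \<not> I c \<and> \<not> I b \<and> I d)"
    proof
      assume h: "\<not> I a \<and> \<not> I c \<and> \<not> I b \<and> I d"
      have "(d, c) \<in> set (NC m)" using P3 h pos2 by auto
      then obtain e where e: "I e" "0 < m e c" using N2' by blast
      have "0 < m a b" using P4 h pos1 by auto
      then show False using ncD[of a c b e] e ord h syD[of c e] pq by auto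
    qed
    show False
      using c0 c1 c2 c3 c4 c5 c6 c7 c8 c9 c10 ord
      by (cases "I a"; cases "I c"; cases "I b"; cases "I d") auto
  qed
qed


lemma gcd_mem: "a < b \<Longrightarrow> b \<le> n \<Longrightarrow> arc_gcd n x dvd snd x a b"
  unfolding arc_gcd_def by (rule Gcd_dvd) blast

lemma gcd_mem2: assumes "symm (snd x)" "a \<le> n" "b \<le> n" "a \<noteq> b" shows "arc_gcd n x dvd snd x a b"
proof (cases "a < b")
  case True then show ?thesis using gcd_mem assms by simp
next
  case False
  then have "b < a" using assms by simp
  then show ?thesis using gcd_mem[of b a x] assms symmD[OF assms(1), of a b] by simp
qed

lemma gcd_fwd: assumes sy: "symm (snd x)"
  shows "arc_gcd n x dvd arc_gcd n (cactus_gen_act n p q x)"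
proof -
  define g where "g = arc_gcd n x"
  define m where "m = snd x"
  have G: "\<And>a b. a \<le> n \<Longrightarrow> b \<le> n \<Longrightarrow> a \<noteq> b \<Longrightarrow> g dvd m a b"
    unfolding g_def m_def using gcd_mem2[OF sy] by blast
  have chCL: "chunked g (CL m)"
    unfolding CL_eq
  proof (rule chunked_concat, intro ballI)
    fix y assume "y \<in> set (map (\<lambda>e. replicate (m (fst e) (snd e)) e) E)"
    then obtain e where e: "e \<in> set E" "y = replicate (m (fst e) (snd e)) e" by auto
    then have "I (fst e)" "snd e \<in> set Ot" using setE by auto
    then have "g dvd m (fst e) (snd e)" using G setO pq by auto
    then show "chunked g y" using e chunked_replicate by simp
  qed
  have chNC: "chunked g (NC m)"
    unfolding NC_eq
    by (rule chunked_zip) (simp_all add: chunked_map chunked_rev chCL)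
  have C: "\<And>a b. g dvd cnt n p q m a b"
    unfolding cnt_def by (rule chunked_filter[OF chNC])
  show ?thesis
    unfolding arc_gcd_def[of n "cactus_gen_act n p q x"]
  proof (rule Gcd_greatest)
    fix y assume "y \<in> {snd (cactus_gen_act n p q x) a b |a b. a < b \<and> b \<le> n}"
    then obtain a b where ab: "a < b" "b \<le> n" "y = snd (cactus_gen_act n p q x) a b" by blast
    show "arc_gcd n x dvd y"
    proof (cases "I a \<and> I b")
      case True
      then have "y = m (r a) (r b)" using ab gen_P1 unfolding m_def by simp
      moreover have "r a \<noteq> r b" "r a \<le> n" "r b \<le> n" using True ab pq by auto
      ultimately show ?thesis using G unfolding g_def by simp
    next
      case False
      then show ?thesis
      proof (cases "I a \<or> I b")
        case True
        then have "y = cnt n p q m a b \<or> y = cnt n p q m b a"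
          using ab False unfolding m_def by (subst (asm) gen_snd) (auto split: if_splits)
        then show ?thesis using C unfolding g_def by auto
      next
        case F2: False
        then have "y = m a b" using ab gen_P4 unfolding m_def by simp
        then show ?thesis using G ab unfolding g_def by simp
      qed
    qed
  qed
qed


definition fk :: "nat \<times> nat \<Rightarrow> nat" where
  "fk e = (q - fst e) * W + sig n q (snd e)"

lemma fmono: "(a1::nat) \<le> a2 \<Longrightarrow> s1 \<le> s2 \<Longrightarrow> a1 * W + s1 \<le> a2 * W + s2"
  by (intro add_mono mult_le_mono1)

lemma fmono2: assumes "(a1::nat) < a2" "s1 < W" shows "a1 * W + s1 \<le> a2 * W + s2"
proof -
  have "a1 * W + s1 < a1 * W + W" using assms by simp
  also have "\<dots> = Suc a1 * W" by simp
  also have "\<dots> \<le> a2 * W" using assms(1) by (intro mult_le_mono1) simp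
  finally show ?thesis by simp
qed

lemma sig_inj: "j \<le> n \<Longrightarrow> j' \<le> n \<Longrightarrow> sig n q j = sig n q j' \<Longrightarrow> j = j'"
  unfolding sig_def by (auto split: if_splits)

lemma divW: "(s::nat) < w \<Longrightarrow> (a * w + s) div w = a" by simp
lemma modW: "(s::nat) < w \<Longrightarrow> (a * w + s) mod w = s" by simp

lemma fk_inj: "inj_on fk (set E)"
proof (rule inj_onI)
  fix e e' assume h: "e \<in> set E" "e' \<in> set E" "fk e = fk e'"
  have s: "snd e \<le> n" "snd e' \<le> n" "fst e \<le> q" "fst e' \<le> q" using h setE setO by auto
  have l1: "sig n q (snd e) < W" "sig n q (snd e') < W" using sig_lt s by auto
  have W0: "0 < W" by simp
  have "fk e div W = q - fst e" unfolding fk_def by (rule divW[OF l1(1)])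
  moreover have "fk e' div W = q - fst e'" unfolding fk_def by (rule divW[OF l1(2)])
  moreover have "fk e mod W = sig n q (snd e)" unfolding fk_def by (rule modW[OF l1(1)])
  moreover have "fk e' mod W = sig n q (snd e')" unfolding fk_def by (rule modW[OF l1(2)])
  ultimately have "q - fst e = q - fst e'" "sig n q (snd e) = sig n q (snd e')" using h(3) by metis+
  then have "fst e = fst e'" "snd e = snd e'" using s sig_inj by auto
  then show "e = e'" by (rule prod_eqI)
qed

lemma NC_sub: "set (NC m) \<subseteq> set E"
proof
  fix y assume "y \<in> set (NC m)"
  moreover obtain u v where "y = (u, v)" by (cases y)
  ultimately show "y \<in> set E" using N2[of u v m] setE by auto
qed

lemma CL_gen: assumes nc: "ncr n (snd x)" and sy: "symm (snd x)"
  shows "CL (snd (cactus_gen_act n p q x)) = NC (snd x)"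
proof -
  define m where "m = snd x"
  define m1 where "m1 = snd (cactus_gen_act n p q x)"
  have nc': "ncr n m" "symm m" using nc sy unfolding m_def by auto
  have A: "CL m1 = concat (map (\<lambda>e. replicate (cnt n p q m (fst e) (snd e)) e) E)"
    unfolding CL_eq
  proof (intro arg_cong[where f=concat] map_cong refl)
    fix e assume "e \<in> set E"
    then have "I (fst e)" "\<not> I (snd e)" using setE setO by auto
    then have "m1 (fst e) (snd e) = cnt n p q m (fst e) (snd e)" unfolding m1_def m_def
      by (subst gen_snd) auto
    then show "replicate (m1 (fst e) (snd e)) e = replicate (cnt n p q m (fst e) (snd e)) e" by simp
  qed
  have sub1: "set (CL m1) \<subseteq> set E" unfolding A by auto
  have sorted1: "sorted (map fk (CL m1))"
    unfolding A sorted_map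
  proof (rule sorted_wrt_concat_rep[OF sorted_E])
    fix e :: "nat \<times> nat" show "fk e \<le> fk e" by simp
  next
    fix e e' :: "nat \<times> nat"
    assume h: "e \<in> set E" "e' \<in> set E" "fst e' \<le> fst e \<and> (fst e = fst e' \<longrightarrow> sig n q (snd e) \<le> sig n q (snd e'))"
    have s: "snd e \<le> n" "fst e \<le> q" using h setE setO by auto
    show "fk e \<le> fk e'"
    proof (cases "fst e = fst e'")
      case True then show ?thesis unfolding fk_def using h by (intro fmono) auto
    next
      case False
      then have "q - fst e < q - fst e'" using h s by auto
      then show ?thesis unfolding fk_def using sig_lt[OF s(1)] by (rule fmono2)
    qed
  qed
  have sorted2: "sorted (map fk (NC m))"
    unfolding sorted_iff_nth_mono_less
  proof (intro allI impI)
    fix k1 k2 assume k: "k1 < k2" "k2 < length (map fk (NC m))"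
    define L where "L = CL m"
    have kL: "k1 < length L" "k2 < length L" using k NC_len unfolding L_def by auto
    have n1: "NC m ! k1 = (r (fst (L ! (length L - Suc k1))), snd (L ! k1))" using NC_nth kL unfolding L_def by blast
    have n2: "NC m ! k2 = (r (fst (L ! (length L - Suc k2))), snd (L ! k2))" using NC_nth kL unfolding L_def by blast
    have I1: "I (fst (L ! (length L - Suc k1)))" using CL_nth_mem[of "length L - Suc k1" m] kL unfolding L_def by simp
    have I2: "I (fst (L ! (length L - Suc k2)))" using CL_nth_mem[of "length L - Suc k2" m] kL unfolding L_def by simp
    have "fst (L ! (length L - Suc k1)) \<le> fst (L ! (length L - Suc k2))"
      using sorted_wrt_nth_less[OF S1[of m], of "length L - Suc k2" "length L - Suc k1"] k kL unfolding L_def by simp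
    then have c1: "q - r (fst (L ! (length L - Suc k1))) \<le> q - r (fst (L ! (length L - Suc k2)))"
      using I1 I2 by simp
    have c2: "sig n q (snd (L ! k1)) \<le> sig n q (snd (L ! k2))"
      using sorted_wrt_nth_less[OF S2[OF nc'], of k1 k2] k kL unfolding L_def by simp
    show "map fk (NC m) ! k1 \<le> map fk (NC m) ! k2"
      using k n1 n2 fmono[OF c1 c2] unfolding fk_def by simp
  qed
  have cnteq: "length (filter (\<lambda>y. y = e) (CL m1)) = length (filter (\<lambda>y. y = e) (NC m))" for e
  proof (cases "e \<in> set E")
    case True
    have "length (filter (\<lambda>y. y = e) (CL m1)) = cnt n p q m (fst e) (snd e)"
      unfolding A using count_rep[OF distE, of e "\<lambda>e. cnt n p q m (fst e) (snd e)"] True by simp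
    also have "\<dots> = length (filter (\<lambda>y. y = e) (NC m))" unfolding cnt_def by simp
    finally show ?thesis .
  next
    case False
    have "length (filter (\<lambda>y. y = e) (CL m1)) = 0"
      unfolding A using count_rep[OF distE, of e "\<lambda>e. cnt n p q m (fst e) (snd e)"] False by simp
    moreover have "filter (\<lambda>y. y = e) (NC m) = []" using NC_sub[of m] False by (auto simp: filter_empty_conv)
    ultimately show ?thesis by simp
  qed
  have "mset (CL m1) = mset (NC m)"
    unfolding multiset_eq_iff count_mset count_list_filter using cnteq by simp
  then have "mset (map fk (CL m1)) = mset (map fk (NC m))" by simp
  then have "sort (map fk (NC m)) = map fk (CL m1)"
    by (rule properties_for_sort[OF _ sorted1])
  moreover have "sort (map fk (NC m)) = map fk (NC m)" by (rule sorted_sort_id[OF sorted2])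
  ultimately have "map fk (CL m1) = map fk (NC m)" by simp
  moreover have "inj_on fk (set (CL m1) \<union> set (NC m))"
    using fk_inj by (rule inj_on_subset) (use sub1 NC_sub[of m] in auto)
  ultimately show ?thesis using inj_on_map_eq_map unfolding m_def m1_def by blast
qed

lemma NC_gen: assumes nc: "ncr n (snd x)" and sy: "symm (snd x)"
  shows "NC (snd (cactus_gen_act n p q x)) = CL (snd x)"
proof -
  define L where "L = CL (snd x)"
  have Lin: "\<And>y. y \<in> set L \<Longrightarrow> r (r (fst y)) = fst y" using set_CL unfolding L_def by auto
  have "NC (snd (cactus_gen_act n p q x)) = zip (map r (rev (map fst (NC (snd x))))) (map snd (NC (snd x)))"
    using NC_eq CL_gen[OF nc sy] by simp
  also have "map fst (NC (snd x)) = map r (rev (map fst L))" unfolding NC_eq L_def by simp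
  also have "map snd (NC (snd x)) = map snd L" unfolding NC_eq L_def by simp
  also have "map r (rev (map r (rev (map fst L)))) = map fst L"
    using Lin by (simp add: rev_map)
  finally show ?thesis unfolding L_def by (simp add: zip_map_fst_snd)
qed

lemma gen_gen: assumes nc: "ncr n (snd x)" and sy: "symm (snd x)" and ab: "a \<le> n" "b \<le> n"
  shows "snd (cactus_gen_act n p q (cactus_gen_act n p q x)) a b = snd x a b"
proof -
  define m where "m = snd x"
  define m1 where "m1 = snd (cactus_gen_act n p q x)"
  define m2 where "m2 = snd (cactus_gen_act n p q (cactus_gen_act n p q x))"
  have NCg: "NC m1 = CL m" unfolding m1_def m_def by (rule NC_gen[OF nc sy])
  have cntm: "cnt n p q m1 u v = m u v" if "I u" "\<not> I v" "v \<le> n" for u v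
  proof -
    have "(u, v) \<in> set E" using that setE setO by auto
    from count_CL[OF this, of m] show ?thesis unfolding cnt_def NCg by simp
  qed
  have "m2 a b = m a b"
  proof (cases "I a")
    case True
    show ?thesis
    proof (cases "I b")
      case True2: True
      have "m2 a b = m1 (r a) (r b)" unfolding m2_def m1_def by (rule gen_P1[OF True True2])
      also have "\<dots> = m (r (r a)) (r (r b))" unfolding m1_def m_def by (rule gen_P1) (use True True2 in auto)
      finally show ?thesis using True True2 by simp
    next
      case False
      then have "m2 a b = cnt n p q m1 a b" using True unfolding m2_def m1_def by (subst gen_snd) auto
      then show ?thesis using cntm True False ab by simp
    qed
  next
    case False
    show ?thesis
    proof (cases "I b")
      case True2: True
      then have "m2 a b = cnt n p q m1 b a" using False unfolding m2_def m1_def by (subst gen_snd) auto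
      then show ?thesis using cntm False True2 ab symmD[OF sy, of a b] unfolding m_def by simp
    next
      case F2: False
      then show ?thesis using False unfolding m2_def m_def by (simp add: gen_P4)
    qed
  qed
  then show ?thesis unfolding m2_def m_def .
qed

lemma gcd_gen: assumes nc: "ncr n (snd x)" and sy: "symm (snd x)"
  shows "arc_gcd n (cactus_gen_act n p q x) = arc_gcd n x"
proof (rule dvd_antisym)
  show "arc_gcd n x dvd arc_gcd n (cactus_gen_act n p q x)" by (rule gcd_fwd[OF sy])
  have "arc_gcd n (cactus_gen_act n p q x) dvd arc_gcd n (cactus_gen_act n p q (cactus_gen_act n p q x))"
    by (rule gcd_fwd[OF gen_symm[OF sy]])
  moreover have "arc_gcd n (cactus_gen_act n p q (cactus_gen_act n p q x)) = arc_gcd n x"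
    unfolding arc_gcd_def using gen_gen[OF nc sy] by (metis (no_types, lifting) less_imp_le_nat order_trans)
  ultimately show "arc_gcd n (cactus_gen_act n p q x) dvd arc_gcd n x" by simp
qed

end

lemma word_inv:
  assumes "\<forall>(p, q) \<in> set w. 1 \<le> p \<and> p < q \<and> q \<le> n" "ncr n (snd x)" "symm (snd x)"
  shows "ncr n (snd (cactus_word_act n w x)) \<and> symm (snd (cactus_word_act n w x)) \<and> arc_gcd n (cactus_word_act n w x) = arc_gcd n x"
  using assms(1)
proof (induction w)
  case Nil then show ?case using assms(2,3) by (simp add: cactus_word_act_def)
next
  case (Cons pq w)
  obtain p q where pqe: "pq = (p, q)" by (cases pq)
  have h: "1 \<le> p" "p < q" "q \<le> n" using Cons.prems pqe by auto
  interpret pq n p q using h by unfold_locales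
  define y where "y = cactus_word_act n w x"
  have IH: "ncr n (snd y) \<and> symm (snd y) \<and> arc_gcd n y = arc_gcd n x"
    unfolding y_def using Cons.IH Cons.prems by simp
  have eq: "cactus_word_act n (pq # w) x = cactus_gen_act n p q y"
    unfolding y_def pqe by (simp add: cactus_word_act_def)
  show ?case unfolding eq using IH gen_ncr gen_symm gcd_gen by simp
qed

theorem mainTheorem5:
  fixes n :: nat and l :: "nat \<Rightarrow> nat" and x :: arc_diagram and w :: "(nat \<times> nat) list"
  assumes "x \<in> arc_diagrams n l"
    and "\<forall>(p, q) \<in> set w. 1 \<le> p \<and> p < q \<and> q \<le> n"
  shows "arc_gcd n (cactus_word_act n w x) = arc_gcd n x"
proof -
  obtain lab m where x: "x = (lab, m)" by (cases x)
  have m: "\<forall>a b. m a b = m b a" "\<forall>a b c d. a < c \<and> c < b \<and> b < d \<and> d \<le> n \<longrightarrow> m a b = 0 \<or> m c d = 0"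
    using assms(1) unfolding x arc_diagrams_def by auto
  have "ncr n (snd x)" "symm (snd x)" unfolding x ncr_def symm_def using m by auto
  then show ?thesis using word_inv[OF assms(2)] by blast
qed

end
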